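(* Let $g,l:\mathbb{R}^d\to\mathbb{R}$ be convex and continuously differentiable, $f=g+l$, with a minimizer $x^*$. Let $x_0\in\mathbb{R}^d$ and let $h(\cdot;x_0):\mathbb{R}^d\to\mathbb{R}$ be continuously differentiable and strictly convex with $h(x;x_0)\ge0$ and $h(x;x_0)=0$ iff $x=x_0$. Let $T\in(0,\infty]$, let $a:[0,T)\to\mathbb{R}$ be continuous with $a_0=0$ and $a_\tau>0$ for $0<\tau<T$, and $A_t:=\int_0^ta_\tau\,d\tau$. Suppose $x,z:[0,T)\to\mathbb{R}^d$ are continuous on $[0,T)$, continuously differentiable on $(0,T)$, $x(0)=x_0$, and for all $t\in[0,T)$ $$A_t\dot x_t=a_t(z_t-x_t)\ (t>0),\qquad z_t=\operatorname{argmin}_{x\in\mathbb{R}^d}\Bigl\{\int_0^ta_\tau\hat f(x;x_\tau)\,d\tau+h(x;x_0)\Bigr\}.$$ Then for all $t\in(0,T)$, $$f(x_t)-f(x^* )\le\frac{h(x^*;x_0)}{A_t}.$$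
   Context: $\hat f(x;y):=g(y)+\langle\nabla g(y),x-y\rangle+l(x)$. *)

theory Defs
  imports "HOL-Analysis.Analysis"
begin

definition strict_convex_on :: "'a::real_vector set \<Rightarrow> ('a \<Rightarrow> real) \<Rightarrow> bool" where
  "strict_convex_on S f \<longleftrightarrow>
     convex S \<and> (\<forall>x\<in>S. \<forall>y\<in>S. \<forall>u::real. x \<noteq> y \<and> 0 < u \<and> u < 1 \<longrightarrow>
        f ((1 - u) *\<^sub>R x + u *\<^sub>R y) < (1 - u) * f x + u * f y)"

definition fhat :: "('a::real_inner \<Rightarrow> real) \<Rightarrow> ('a \<Rightarrow> 'a) \<Rightarrow> ('a \<Rightarrow> real) \<Rightarrow> 'a \<Rightarrow> 'a \<Rightarrow> real" where
  "fhat g Dg l x y = g y + inner (Dg y) (x - y) + l x"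

end

theory Submission
  imports Defs
begin

lemma tangent_ineq:
  fixes f :: "'a::real_inner \<Rightarrow> real"
  assumes cv: "convex_on UNIV f" and gd: "GDERIV f x :> D"
  shows "f x + D \<bullet> (y - x) \<le> f y"
proof -
  let ?p = "\<lambda>u::real. x + u *\<^sub>R (y - x)"
  define \<phi> where "\<phi> = (\<lambda>u. f (?p u))"
  have cvx: "convex_on UNIV \<phi>"
  proof (rule convex_onI)
    fix t u v :: real assume "t > 0" "t < 1"
    have e: "?p ((1-t) *\<^sub>R u + t *\<^sub>R v) = (1-t) *\<^sub>R ?p u + t *\<^sub>R ?p v"
      by (simp add: algebra_simps)
    show "\<phi> ((1 - t) *\<^sub>R u + t *\<^sub>R v) \<le> (1 - t) * \<phi> u + t * \<phi> v"
      using convex_onD[OF cv, of t "?p u" "?p v"] \<open>t>0\<close> \<open>t<1\<close> unfolding \<phi>_def e by simp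
  qed simp
  have p: "(?p has_derivative (\<lambda>h. h *\<^sub>R (y-x))) (at 0)"
    by (auto intro!: derivative_eq_intros)
  have fd: "(f has_derivative (\<lambda>h. h \<bullet> D)) (at (?p 0))" using gd by (simp add: gderiv_def)
  have "(\<phi> has_derivative (\<lambda>h. (h *\<^sub>R (y-x)) \<bullet> D)) (at 0)"
    unfolding \<phi>_def using has_derivative_compose[OF p fd] by simp
  then have "(\<phi> has_field_derivative ((y-x) \<bullet> D)) (at 0)"
    unfolding has_field_derivative_def by (simp add: mult.commute[of _ "(y-x) \<bullet> D"])
  then have "\<phi> 1 - \<phi> 0 \<ge> ((y-x) \<bullet> D) * (1 - 0)"
    by (intro convex_on_imp_above_tangent[OF cvx]) auto
  then show ?thesis by (simp add: \<phi>_def inner_commute)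
qed

lemma gderiv_chain:
  fixes f :: "'a::real_inner \<Rightarrow> real"
  assumes "GDERIV f (p s) :> D" "(p has_vector_derivative p') (at s)"
  shows "((\<lambda>t. f (p t)) has_real_derivative (D \<bullet> p')) (at s)"
proof -
  have "((\<lambda>t. f (p t)) has_derivative (\<lambda>h. (h *\<^sub>R p') \<bullet> D)) (at s)"
    using has_derivative_compose[OF assms(2)[unfolded has_vector_derivative_def] assms(1)[unfolded gderiv_def]] by simp
  then show ?thesis unfolding has_field_derivative_def
    by (simp add: mult.commute[of _ "D \<bullet> p'"] inner_commute)
qed

lemma indef_cont:
  fixes F :: "real \<Rightarrow> 'b::banach"
  assumes "continuous_on {0..t0} F"
  shows "continuous_on {0..t0} (\<lambda>u. integral {0..u} F)"
proof -
  have "\<forall>s\<in>{0..t0}. continuous (at s within {0..t0}) (\<lambda>u. integral {0..u} F)"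
    using integral_has_vector_derivative[OF assms] has_vector_derivative_continuous by blast
  then show ?thesis using continuous_on_eq_continuous_within by blast
qed

lemma indef_deriv:
  fixes F :: "real \<Rightarrow> 'b::banach"
  assumes "continuous_on {0..t0} F" "0 < s" "s < t0"
  shows "((\<lambda>u. integral {0..u} F) has_vector_derivative F s) (at s)"
  using integral_has_vector_derivative[OF assms(1), of s] at_within_interior[of s "{0..t0}"] assms
  by auto

lemma int_sub:
  fixes F :: "real \<Rightarrow> 'b::banach"
  assumes "continuous_on {0..t0} F" "u \<in> {0..t0}"
  shows "F integrable_on {0..u}"
  by (meson assms atLeastAtMost_iff atLeastatMost_subset_iff continuous_on_subset integrable_continuous_real order_refl)

theorem mainTheorem5:
  fixes g l h :: "'a::euclidean_space \<Rightarrow> real"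
    and Dg Dl Dh :: "'a \<Rightarrow> 'a"
    and xstar x0 :: 'a
    and T :: ereal
    and a :: "real \<Rightarrow> real"
    and x z xd zd :: "real \<Rightarrow> 'a"
  assumes g_convex: "convex_on UNIV g"
    and l_convex: "convex_on UNIV l"
    and g_grad: "\<And>y. GDERIV g y :> Dg y" and Dg_cont: "continuous_on UNIV Dg"
    and l_grad: "\<And>y. GDERIV l y :> Dl y" and Dl_cont: "continuous_on UNIV Dl"
    and xstar_min: "\<And>y. g xstar + l xstar \<le> g y + l y"
    and h_grad: "\<And>y. GDERIV h y :> Dh y" and Dh_cont: "continuous_on UNIV Dh"
    and h_strict: "strict_convex_on UNIV h"
    and h_nonneg: "\<And>y. h y \<ge> 0"
    and h_zero: "\<And>y. h y = 0 \<longleftrightarrow> y = x0"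
    and T_pos: "T > 0"
    and a_cont: "continuous_on {t. 0 \<le> t \<and> ereal t < T} a"
    and a_zero: "a 0 = 0"
    and a_pos: "\<And>t. 0 < t \<Longrightarrow> ereal t < T \<Longrightarrow> a t > 0"
    and x_cont: "continuous_on {t. 0 \<le> t \<and> ereal t < T} x"
    and z_cont: "continuous_on {t. 0 \<le> t \<and> ereal t < T} z"
    and x_deriv: "\<And>t. 0 < t \<Longrightarrow> ereal t < T \<Longrightarrow> (x has_vector_derivative xd t) (at t)"
    and z_deriv: "\<And>t. 0 < t \<Longrightarrow> ereal t < T \<Longrightarrow> (z has_vector_derivative zd t) (at t)"
    and xd_cont: "continuous_on {t. 0 < t \<and> ereal t < T} xd"
    and zd_cont: "continuous_on {t. 0 < t \<and> ereal t < T} zd"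
    and x_init: "x 0 = x0"
    and ode: "\<And>t. 0 < t \<Longrightarrow> ereal t < T \<Longrightarrow>
                integral {0..t} a *\<^sub>R xd t = a t *\<^sub>R (z t - x t)"
    and z_argmin: "\<And>t y. 0 \<le> t \<Longrightarrow> ereal t < T \<Longrightarrow>
                integral {0..t} (\<lambda>\<tau>. a \<tau> * fhat g Dg l (z t) (x \<tau>)) + h (z t)
                \<le> integral {0..t} (\<lambda>\<tau>. a \<tau> * fhat g Dg l y (x \<tau>)) + h y"
  shows "\<And>t. 0 < t \<Longrightarrow> ereal t < T \<Longrightarrow>
           (g (x t) + l (x t)) - (g xstar + l xstar) \<le> h xstar / integral {0..t} a"
proof -
  fix t0 assume t0: "0 < t0" "ereal t0 < T"
  have inT: "\<And>s. s \<le> t0 \<Longrightarrow> ereal s < T"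
    using t0(2) by (metis ereal_less_eq(3) order_le_less_trans)
  have I_sub: "{0..t0} \<subseteq> {t. 0 \<le> t \<and> ereal t < T}" using inT by auto
  have ca: "continuous_on {0..t0} a" using continuous_on_subset[OF a_cont I_sub] .
  have cx: "continuous_on {0..t0} x" using continuous_on_subset[OF x_cont I_sub] .
  have cz: "continuous_on {0..t0} z" using continuous_on_subset[OF z_cont I_sub] .
  have gd: "\<And>y. (g has_derivative (\<lambda>v. v \<bullet> Dg y)) (at y)" using g_grad by (simp add: gderiv_def)
  have ld: "\<And>y. (l has_derivative (\<lambda>v. v \<bullet> Dl y)) (at y)" using l_grad by (simp add: gderiv_def)
  have hd: "\<And>y. (h has_derivative (\<lambda>v. v \<bullet> Dh y)) (at y)" using h_grad by (simp add: gderiv_def)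
  have gc: "continuous_on UNIV g"
    using gd by (meson continuous_at_imp_continuous_on has_derivative_continuous)
  have lc: "continuous_on UNIV l"
    using ld by (meson continuous_at_imp_continuous_on has_derivative_continuous)
  have hc: "continuous_on UNIV h"
    using hd by (meson continuous_at_imp_continuous_on has_derivative_continuous)
  have cgx: "continuous_on {0..t0} (\<lambda>\<tau>. g (x \<tau>))" by (rule continuous_on_compose2[OF gc cx]) auto
  have clx: "continuous_on {0..t0} (\<lambda>\<tau>. l (x \<tau>))" by (rule continuous_on_compose2[OF lc cx]) auto
  have clz: "continuous_on {0..t0} (\<lambda>\<tau>. l (z \<tau>))" by (rule continuous_on_compose2[OF lc cz]) auto
  have chz: "continuous_on {0..t0} (\<lambda>\<tau>. h (z \<tau>))" by (rule continuous_on_compose2[OF hc cz]) auto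
  have cDgx: "continuous_on {0..t0} (\<lambda>\<tau>. Dg (x \<tau>))" by (rule continuous_on_compose2[OF Dg_cont cx]) auto
  define F1 where "F1 = (\<lambda>\<tau>. a \<tau> * (g (x \<tau>) - Dg (x \<tau>) \<bullet> x \<tau>))"
  define F2 where "F2 = (\<lambda>\<tau>. a \<tau> *\<^sub>R Dg (x \<tau>))"
  define A where "A = (\<lambda>u. integral {0..u} a)"
  define C where "C = (\<lambda>u. integral {0..u} F1)"
  define G where "G = (\<lambda>u. integral {0..u} F2)"
  have cF1: "continuous_on {0..t0} F1" unfolding F1_def by (intro continuous_intros ca cgx cDgx cx)
  have cF2: "continuous_on {0..t0} F2" unfolding F2_def by (intro continuous_intros ca cDgx)
  have ident: "integral {0..u} (\<lambda>\<tau>. a \<tau> * fhat g Dg l y (x \<tau>)) = C u + G u \<bullet> y + A u * l y"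
    if u: "u \<in> {0..t0}" for u y
  proof -
    have i1: "F1 integrable_on {0..u}" by (rule int_sub[OF cF1 u])
    have i2: "F2 integrable_on {0..u}" by (rule int_sub[OF cF2 u])
    have i3: "a integrable_on {0..u}" by (rule int_sub[OF ca u])
    have i2': "(\<lambda>\<tau>. F2 \<tau> \<bullet> y) integrable_on {0..u}"
      using integrable_linear[OF i2 bounded_linear_inner_left[of y]] by (simp add: o_def)
    have i3': "(\<lambda>\<tau>. a \<tau> * l y) integrable_on {0..u}"
      using i3 by (rule integrable_on_mult_left)
    have e: "(\<lambda>\<tau>. a \<tau> * fhat g Dg l y (x \<tau>)) = (\<lambda>\<tau>. (F1 \<tau> + F2 \<tau> \<bullet> y) + a \<tau> * l y)"
      by (auto simp: fhat_def F1_def F2_def algebra_simps inner_diff_right)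
    have "integral {0..u} (\<lambda>\<tau>. F2 \<tau> \<bullet> y) = G u \<bullet> y"
      using integral_linear[OF i2 bounded_linear_inner_left[of y]] by (simp add: o_def G_def)
    then show ?thesis unfolding e
      using i1 i2' i3'
      by (simp add: integral_add integrable_add C_def A_def)
  qed
  show "(g (x t0) + l (x t0)) - (g xstar + l xstar) \<le> h xstar / integral {0..t0} a"
  proof -
  have a_nn: "a \<tau> \<ge> 0" if "\<tau> \<in> {0..t0}" for \<tau>
    using that a_zero a_pos[of \<tau>] inT by (cases "\<tau> = 0") auto
  have opt: "G s + A s *\<^sub>R Dl (z s) + Dh (z s) = 0" if s: "s \<in> {0..t0}" for s
  proof -
    define W where "W = G s + A s *\<^sub>R Dl (z s) + Dh (z s)"
    define \<Psi> where "\<Psi> = (\<lambda>y. C s + G s \<bullet> y + A s * l y + h y)"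
    have min: "\<forall>y\<in>UNIV. \<Psi> (z s) \<le> \<Psi> y"
      using z_argmin[of s] s inT ident[OF s] by (auto simp: \<Psi>_def)
    have "(\<Psi> has_derivative (\<lambda>v. v \<bullet> W)) (at (z s))"
      unfolding \<Psi>_def W_def
      by (auto intro!: derivative_eq_intros ld hd simp: inner_add_right inner_commute)
    then have "(\<lambda>v. v \<bullet> W) = (\<lambda>v. 0)"
      using differential_zero_maxmin[of "z s" UNIV] min by blast
    then have "W \<bullet> W = 0" by metis
    then show ?thesis by (simp add: W_def)
  qed
  define E where "E = (\<lambda>u. C u + G u \<bullet> z u + A u * l (z u) + h (z u) - A u * (g (x u) + l (x u)))"
  have Ederiv: "\<exists>D. (E has_real_derivative D) (at s) \<and> D \<ge> 0" if s: "0 < s" "s < t0" for s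
  proof -
    have sI: "s \<in> {0..t0}" using s by auto
    have dA: "(A has_real_derivative a s) (at s)"
      using indef_deriv[OF ca s] by (simp add: A_def has_real_derivative_iff_has_vector_derivative)
    have dC: "(C has_real_derivative F1 s) (at s)"
      using indef_deriv[OF cF1 s] by (simp add: C_def has_real_derivative_iff_has_vector_derivative)
    have dG: "(G has_vector_derivative F2 s) (at s)"
      using indef_deriv[OF cF2 s] by (simp add: G_def)
    have sT: "ereal s < T" using inT s by auto
    have dz: "(z has_vector_derivative zd s) (at s)" using z_deriv[OF s(1) sT] .
    have dx: "(x has_vector_derivative xd s) (at s)" using x_deriv[OF s(1) sT] .
    have dGz: "((\<lambda>u. G u \<bullet> z u) has_real_derivative (G s \<bullet> zd s + F2 s \<bullet> z s)) (at s)"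
      using bounded_bilinear.has_vector_derivative[OF bounded_bilinear_inner dG dz]
      by (simp add: has_real_derivative_iff_has_vector_derivative)
    have dlz: "((\<lambda>u. l (z u)) has_real_derivative (Dl (z s) \<bullet> zd s)) (at s)"
      by (rule gderiv_chain[OF l_grad dz])
    have dhz: "((\<lambda>u. h (z u)) has_real_derivative (Dh (z s) \<bullet> zd s)) (at s)"
      by (rule gderiv_chain[OF h_grad dz])
    have dgx: "((\<lambda>u. g (x u)) has_real_derivative (Dg (x s) \<bullet> xd s)) (at s)"
      by (rule gderiv_chain[OF g_grad dx])
    have dlx: "((\<lambda>u. l (x u)) has_real_derivative (Dl (x s) \<bullet> xd s)) (at s)"
      by (rule gderiv_chain[OF l_grad dx])
    define D where "D = F1 s + (G s \<bullet> zd s + F2 s \<bullet> z s) + (a s * l (z s) + (Dl (z s) \<bullet> zd s) * A s)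
       + Dh (z s) \<bullet> zd s - (a s * (g (x s) + l (x s)) + (Dg (x s) \<bullet> xd s + Dl (x s) \<bullet> xd s) * A s)"
    have dE: "(E has_real_derivative D) (at s)"
      unfolding E_def D_def
      by (intro DERIV_diff DERIV_add DERIV_mult dC dGz dA dlz dhz dgx dlx)
    have k1: "G s \<bullet> zd s + A s * (Dl (z s) \<bullet> zd s) + Dh (z s) \<bullet> zd s = 0"
      using arg_cong[OF opt[OF sI], of "\<lambda>w. w \<bullet> zd s"] by (simp add: inner_add_left)
    have k2: "A s * ((Dg (x s) + Dl (x s)) \<bullet> xd s) = a s * ((Dg (x s) + Dl (x s)) \<bullet> (z s - x s))"
      using arg_cong[OF ode[OF s(1) sT], of "\<lambda>w. (Dg (x s) + Dl (x s)) \<bullet> w"] by (simp add: A_def)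
    have k2': "A s * (Dg (x s) \<bullet> xd s + Dl (x s) \<bullet> xd s) = a s * (Dg (x s) \<bullet> z s - Dg (x s) \<bullet> x s + (Dl (x s) \<bullet> z s - Dl (x s) \<bullet> x s))"
      using k2 by (simp add: inner_add_left inner_diff_right)
    have DD: "D = a s * (l (z s) - (l (x s) + Dl (x s) \<bullet> (z s - x s)))"
      unfolding D_def F1_def F2_def using k1 k2'
      by (simp add: inner_diff_right algebra_simps)
    have "l (x s) + Dl (x s) \<bullet> (z s - x s) \<le> l (z s)" by (rule tangent_ineq[OF l_convex l_grad])
    then have "D \<ge> 0" unfolding DD using a_nn[OF sI] by simp
    with dE show ?thesis by blast
  qed
  have cE: "continuous_on {0..t0} E"
    unfolding E_def A_def C_def G_def
    by (intro continuous_intros indef_cont ca cF1 cF2 cz clz chz cgx clx)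
  have E0: "E 0 \<ge> 0" using h_nonneg by (simp add: E_def A_def C_def G_def)
  have "E 0 \<le> E t0"
    by (rule DERIV_nonneg_imp_increasing_open[OF _ Ederiv cE]) (use t0 in auto)
  with E0 have Ept: "A t0 * (g (x t0) + l (x t0)) \<le> C t0 + G t0 \<bullet> z t0 + A t0 * l (z t0) + h (z t0)"
    by (simp add: E_def)
  have t0I: "t0 \<in> {0..t0}" using t0 by auto
  have "C t0 + G t0 \<bullet> z t0 + A t0 * l (z t0) + h (z t0)
      = integral {0..t0} (\<lambda>\<tau>. a \<tau> * fhat g Dg l (z t0) (x \<tau>)) + h (z t0)"
    using ident[OF t0I] by simp
  also have "\<dots> \<le> integral {0..t0} (\<lambda>\<tau>. a \<tau> * fhat g Dg l xstar (x \<tau>)) + h xstar"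
    using z_argmin[of t0 xstar] t0 by simp
  also have "integral {0..t0} (\<lambda>\<tau>. a \<tau> * fhat g Dg l xstar (x \<tau>)) \<le> integral {0..t0} (\<lambda>\<tau>. a \<tau> * (g xstar + l xstar))"
  proof (rule integral_le)
    have "continuous_on {0..t0} (\<lambda>\<tau>. a \<tau> * fhat g Dg l xstar (x \<tau>))"
      unfolding fhat_def by (intro continuous_intros ca cgx cDgx cx)
    then show "(\<lambda>\<tau>. a \<tau> * fhat g Dg l xstar (x \<tau>)) integrable_on {0..t0}" using int_sub t0I by blast
    show "(\<lambda>\<tau>. a \<tau> * (g xstar + l xstar)) integrable_on {0..t0}"
      using int_sub[OF ca t0I] by (rule integrable_on_mult_left)
    fix \<tau> assume tI: "\<tau> \<in> {0..t0}"
    have "g (x \<tau>) + Dg (x \<tau>) \<bullet> (xstar - x \<tau>) \<le> g xstar" by (rule tangent_ineq[OF g_convex g_grad])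
    then have "fhat g Dg l xstar (x \<tau>) \<le> g xstar + l xstar" by (simp add: fhat_def)
    then show "a \<tau> * fhat g Dg l xstar (x \<tau>) \<le> a \<tau> * (g xstar + l xstar)"
      using a_nn[OF tI] by (rule mult_left_mono)
  qed
  also have "integral {0..t0} (\<lambda>\<tau>. a \<tau> * (g xstar + l xstar)) = A t0 * (g xstar + l xstar)"
    by (simp add: A_def)
  finally have main: "A t0 * (g (x t0) + l (x t0)) \<le> A t0 * (g xstar + l xstar) + h xstar"
    using Ept by linarith
  have Apos: "A 0 < A t0"
  proof (rule DERIV_pos_imp_increasing_open[OF t0(1)])
    fix s assume s: "0 < s" "s < t0"
    have "(A has_real_derivative a s) (at s)"
      using indef_deriv[OF ca s] by (simp add: A_def has_real_derivative_iff_has_vector_derivative)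
    then show "\<exists>y. (A has_real_derivative y) (at s) \<and> 0 < y" using a_pos[OF s(1)] inT s by auto
  next
    show "continuous_on {0..t0} A" unfolding A_def by (rule indef_cont[OF ca])
  qed
  then have Apos': "A t0 > 0" by (simp add: A_def)
  have "A t0 * ((g (x t0) + l (x t0)) - (g xstar + l xstar)) \<le> h xstar"
    using main by (simp add: algebra_simps)
  then show ?thesis using Apos' by (simp add: A_def pos_le_divide_eq mult.commute)
  qed
qed


end
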